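(* Let $m,n,k$ be positive integers. If there exists an orthogonal array $\mathrm{OA}(mn,k,2,2)$, then there exists a set of $k$ mutually orthogonal frequency rectangles of type $\mathrm{FR}(2m,2n;2)$, i.e. a $k$--$\mathrm{MOFR}(2m,2n;2)$.
   Context: A frequency rectangle of type $\mathrm{FR}(m,n;q)$ is an $m\times n$ array on a symbol set $S$ of size $q$ such that each symbol of $S$ appears exactly $n/q$ times in each row and exactly $m/q$ times in each column. Two frequency rectangles of the same type (on the same symbol set) are orthogonal if, when superimposed, each of the $q^2$ ordered pairs of symbols appears the same number of times. A $k$--$\mathrm{MOFR}(m,n;q)$ is a set of $k$ frequency rectangles of type $\mathrm{FR}(m,n;q)$ that are pairwise orthogonal. An orthogonal array $\mathrm{OA}(N,k,q,t)$ is an $N\times k$ array on a symbol set of size $q$ such that in every $N\times t$ subarray each ordered $t$-tuple of symbols appears as a row the same number of times. *)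

theory Defs
  imports Main
begin

text \<open>Arrays are functions nat => nat => nat; an m x n array uses row indices i < m and
column indices j < n. The symbol set of size q is fixed to be {0..<q}.\<close>

definition freq_rect :: "nat \<Rightarrow> nat \<Rightarrow> nat \<Rightarrow> (nat \<Rightarrow> nat \<Rightarrow> nat) \<Rightarrow> bool" where
  "freq_rect m n q A \<longleftrightarrow>
     q dvd m \<and> q dvd n \<and>
     (\<forall>i<m. \<forall>j<n. A i j < q) \<and>
     (\<forall>i<m. \<forall>s<q. card {j. j < n \<and> A i j = s} = n div q) \<and>
     (\<forall>j<n. \<forall>s<q. card {i. i < m \<and> A i j = s} = m div q)"

definition orthogonal_fr :: "nat \<Rightarrow> nat \<Rightarrow> nat \<Rightarrow> (nat \<Rightarrow> nat \<Rightarrow> nat) \<Rightarrow> (nat \<Rightarrow> nat \<Rightarrow> nat) \<Rightarrow> bool" where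
  "orthogonal_fr m n q A B \<longleftrightarrow>
     (\<exists>lam. \<forall>s<q. \<forall>t<q. card {(i, j). i < m \<and> j < n \<and> A i j = s \<and> B i j = t} = lam)"

definition MOFR :: "nat \<Rightarrow> nat \<Rightarrow> nat \<Rightarrow> nat \<Rightarrow> (nat \<Rightarrow> nat \<Rightarrow> nat \<Rightarrow> nat) \<Rightarrow> bool" where
  "MOFR k m n q F \<longleftrightarrow>
     (\<forall>a<k. freq_rect m n q (F a)) \<and>
     (\<forall>a<k. \<forall>b<k. a \<noteq> b \<longrightarrow> orthogonal_fr m n q (F a) (F b))"

definition orth_array :: "nat \<Rightarrow> nat \<Rightarrow> nat \<Rightarrow> nat \<Rightarrow> (nat \<Rightarrow> nat \<Rightarrow> nat) \<Rightarrow> bool" where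
  "orth_array N k q t Arr \<longleftrightarrow>
     (\<forall>r<N. \<forall>c<k. Arr r c < q) \<and>
     (\<forall>cs. distinct cs \<and> length cs = t \<and> set cs \<subseteq> {..<k} \<longrightarrow>
        (\<exists>lam. \<forall>tup. length tup = t \<and> set tup \<subseteq> {..<q} \<longrightarrow>
             card {r. r < N \<and> map (Arr r) cs = tup} = lam))"

end

theory Submission
  imports Defs
begin

lemma ar4b: "(x::nat) < 2 \<Longrightarrow> (s::nat) < 2 \<Longrightarrow> (c::nat) < 2 \<Longrightarrow> ((x + c) mod 2 = s) = (x = (s + c) mod 2)"
  by (auto simp: less_2_cases_iff)
lemma ar4: "(x::nat) < 2 \<Longrightarrow> (s::nat) < 2 \<Longrightarrow> ((x + a + b) mod 2 = s) = (x = (s + a + b) mod 2)"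
proof -
  assume h: "x < 2" "s < 2"
  have "(x + a + b) mod 2 = (x + (a + b) mod 2) mod 2" by (simp add: mod_add_right_eq add.assoc)
  moreover have "(s + a + b) mod 2 = (s + (a + b) mod 2) mod 2" by (simp add: mod_add_right_eq add.assoc)
  moreover have "(a + b) mod 2 < 2" by simp
  ultimately show ?thesis using ar4b[OF h] by simp
qed
lemma ar1: "(s::nat) < 2 \<Longrightarrow> (u + j) mod 2 = s \<Longrightarrow> j = 2*(j div 2) + (s+u) mod 2"
proof -
  assume "(u + j) mod 2 = s"
  then have "(s + u) mod 2 = (u + j + u) mod 2" by (metis mod_add_left_eq)
  also have "u + j + u = j + 2*u" by simp
  then have "(u + j + u) mod 2 = (j + 2*u) mod 2" by (rule arg_cong)
  also have "\<dots> = j mod 2" by simp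
  finally show ?thesis by simp
qed
lemma ar2: "(s::nat) < 2 \<Longrightarrow> (u + (2*y + (s+u) mod 2)) mod 2 = s"
proof -
  assume s: "s < 2"
  have e: "u + (2*y + (s+u) mod 2) = (u + (s+u) mod 2) + y*2" by simp
  have "(u + (2*y + (s+u) mod 2)) mod 2 = (u + (s+u) mod 2) mod 2"
    unfolding e by (rule mod_mult_self1)
  also have "\<dots> = (u + (s + u)) mod 2" by (simp add: mod_add_right_eq)
  also have "u + (s + u) = s + u*2" by simp
  then have "(u + (s + u)) mod 2 = (s + u*2) mod 2" by (rule arg_cong)
  also have "\<dots> = s" using s by simp
  finally show ?thesis .
qed

lemma half_count:
  fixes h :: "nat \<Rightarrow> nat"
  assumes "s < 2"
  shows "card {j. j < 2*n \<and> (h (j div 2) + j) mod 2 = s} = n"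
proof -
  define g where "g y = 2*y + (s + h y) mod 2" for y
  have gd: "g y div 2 = y" for y by (simp add: g_def)
  have inj: "inj_on g {..<n}"
    by (metis gd inj_onI)
  have "{j. j < 2*n \<and> (h (j div 2) + j) mod 2 = s} = g ` {..<n}"
  proof (rule set_eqI, rule iffI)
    fix j assume "j \<in> {j. j < 2*n \<and> (h (j div 2) + j) mod 2 = s}"
    then have j: "j < 2*n" "(h (j div 2) + j) mod 2 = s" by auto
    have "j = g (j div 2)" unfolding g_def using ar1[OF assms j(2)] by simp
    moreover have "j div 2 < n" using j by simp
    ultimately show "j \<in> g ` {..<n}" by blast
  next
    fix j assume "j \<in> g ` {..<n}"
    then obtain y where y: "y < n" "j = g y" by auto
    have "j div 2 = y" using y unfolding g_def by simp
    moreover have "j < 2*n" using y unfolding g_def by simp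
    moreover have "(h y + j) mod 2 = s" using y ar2[OF assms] unfolding g_def by simp
    ultimately show "j \<in> {j. j < 2*n \<and> (h (j div 2) + j) mod 2 = s}" by simp
  qed
  then show ?thesis using inj card_image by fastforce
qed

lemma block_count:
  fixes P :: "nat \<Rightarrow> nat \<Rightarrow> nat \<Rightarrow> bool"
  assumes "0 < n"
  shows "card {(i, j). i < 2*m \<and> j < 2*n \<and> P ((i div 2)*n + j div 2) (i mod 2) (j mod 2)}
       = card {(r, a, b). r < m*n \<and> a < 2 \<and> b < 2 \<and> P r a b}"
proof (rule bij_betw_same_card)
  let ?f = "\<lambda>(i::nat, j::nat). ((i div 2)*n + j div 2, i mod 2, j mod 2)"
  let ?g = "\<lambda>(r::nat, a::nat, b::nat). (2*(r div n) + a, 2*(r mod n) + b)"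
  show "bij_betw ?f {(i, j). i < 2*m \<and> j < 2*n \<and> P ((i div 2)*n + j div 2) (i mod 2) (j mod 2)}
       {(r, a, b). r < m*n \<and> a < 2 \<and> b < 2 \<and> P r a b}"
  proof (rule bij_betw_byWitness[where f' = ?g])
    show "\<forall>x\<in>{(i, j). i < 2*m \<and> j < 2*n \<and> P ((i div 2)*n + j div 2) (i mod 2) (j mod 2)}. ?g (?f x) = x"
    proof
      fix x assume "x \<in> {(i, j). i < 2*m \<and> j < 2*n \<and> P ((i div 2)*n + j div 2) (i mod 2) (j mod 2)}"
      then obtain i j where x: "x = (i, j)" "j < 2*n" by auto
      have "j div 2 < n" using x by simp
      then have "((i div 2)*n + j div 2) div n = i div 2" "((i div 2)*n + j div 2) mod n = j div 2"
        using assms by simp_all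
      then show "?g (?f x) = x" using x by simp
    qed
    show "\<forall>y\<in>{(r, a, b). r < m*n \<and> a < 2 \<and> b < 2 \<and> P r a b}. ?f (?g y) = y"
      by auto
    show "?f ` {(i, j). i < 2*m \<and> j < 2*n \<and> P ((i div 2)*n + j div 2) (i mod 2) (j mod 2)}
        \<subseteq> {(r, a, b). r < m*n \<and> a < 2 \<and> b < 2 \<and> P r a b}"
    proof
      fix y assume "y \<in> ?f ` {(i, j). i < 2*m \<and> j < 2*n \<and> P ((i div 2)*n + j div 2) (i mod 2) (j mod 2)}"
      then obtain i j where y: "y = ?f (i, j)" "i < 2*m" "j < 2*n" "P ((i div 2)*n + j div 2) (i mod 2) (j mod 2)" by auto
      have "i div 2 < m" "j div 2 < n" using y by auto
      have "(i div 2)*n + j div 2 < (i div 2)*n + n" using \<open>j div 2 < n\<close> by simp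
      also have "\<dots> = Suc (i div 2) * n" by simp
      also have "\<dots> \<le> m*n" using \<open>i div 2 < m\<close> by (intro mult_le_mono1) simp
      finally have "(i div 2)*n + j div 2 < m*n" .
      then show "y \<in> {(r, a, b). r < m*n \<and> a < 2 \<and> b < 2 \<and> P r a b}" using y by simp
    qed
    show "?g ` {(r, a, b). r < m*n \<and> a < 2 \<and> b < 2 \<and> P r a b}
        \<subseteq> {(i, j). i < 2*m \<and> j < 2*n \<and> P ((i div 2)*n + j div 2) (i mod 2) (j mod 2)}"
    proof
      fix x assume "x \<in> ?g ` {(r, a, b). r < m*n \<and> a < 2 \<and> b < 2 \<and> P r a b}"
      then obtain r a b where x: "x = ?g (r, a, b)" "r < m*n" "a < 2" "b < 2" "P r a b" by auto
      have "r div n < m" using x by (simp add: less_mult_imp_div_less)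
      moreover have "r mod n < n" using assms by simp
      moreover have "r div n * n + r mod n = r" by simp
      ultimately show "x \<in> {(i, j). i < 2*m \<and> j < 2*n \<and> P ((i div 2)*n + j div 2) (i mod 2) (j mod 2)}"
        using x by auto
    qed
  qed
qed


lemma ar3: "((x::nat) + i + j) mod 2 = (x + i mod 2 + j mod 2) mod 2"
  by (metis mod_add_left_eq mod_add_right_eq add.assoc)

lemma split_count:
  fixes P :: "nat \<Rightarrow> nat \<Rightarrow> nat \<Rightarrow> bool"
  assumes "\<And>a b. a < 2 \<Longrightarrow> b < 2 \<Longrightarrow> card {r. r < N \<and> P r a b} = L"
  shows "card {(r, a, b). r < N \<and> a < 2 \<and> b < 2 \<and> P r a b} = 4 * L"
proof -
  let ?S = "SIGMA ab:{..<(2::nat)}\<times>{..<(2::nat)}. {r. r < N \<and> P r (fst ab) (snd ab)}"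
  have bij: "bij_betw (\<lambda>(r, a, b). ((a, b), r)) {(r, a, b). r < N \<and> a < 2 \<and> b < 2 \<and> P r a b} ?S"
    by (rule bij_betw_byWitness[where f'="\<lambda>((a, b), r). (r, a, b)"]) auto
  have "card {(r, a, b). r < N \<and> a < 2 \<and> b < 2 \<and> P r a b} = card ?S"
    using bij by (rule bij_betw_same_card)
  also have "\<dots> = (\<Sum>ab\<in>{..<(2::nat)}\<times>{..<(2::nat)}. card {r. r < N \<and> P r (fst ab) (snd ab)})"
    by (rule card_SigmaI; auto)
  also have "\<dots> = (\<Sum>ab\<in>{..<(2::nat)}\<times>{..<(2::nat)}. L)"
    by (rule sum.cong) (auto simp: assms)
  also have "\<dots> = 4 * L" by simp
  finally show ?thesis .
qed

theorem mainTheorem1: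
  fixes m n k :: nat
  assumes "0 < m" and "0 < n" and "0 < k"
    and "\<exists>Arr. orth_array (m * n) k 2 2 Arr"
  shows "\<exists>F. MOFR k (2 * m) (2 * n) 2 F"
proof -
  obtain Arr where oa: "orth_array (m * n) k 2 2 Arr" using assms(4) by blast
  have lt2: "\<And>r c. r < m*n \<Longrightarrow> c < k \<Longrightarrow> Arr r c < 2" using oa by (simp add: orth_array_def)
  define F where "F c i j = (Arr ((i div 2)*n + j div 2) c + i + j) mod 2" for c i j
  have fr: "freq_rect (2*m) (2*n) 2 (F c)" if "c < k" for c
  proof -
    have rows: "card {j. j < 2*n \<and> F c i j = s} = n" if "s < 2" for i s
    proof -
      have eq: "{j. j < 2*n \<and> F c i j = s}
          = {j. j < 2*n \<and> (Arr ((i div 2)*n + j div 2) c + i + j) mod 2 = s}"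
        unfolding F_def by (rule refl)
      show ?thesis unfolding eq
        by (rule half_count[where h="\<lambda>y. Arr ((i div 2)*n + y) c + i" and n=n, OF that, simplified])
    qed
    have cols: "card {i. i < 2*m \<and> F c i j = s} = m" if "s < 2" for j s
    proof -
      have eq: "{i. i < 2*m \<and> F c i j = s}
          = {i. i < 2*m \<and> (Arr ((i div 2)*n + j div 2) c + j + i) mod 2 = s}"
        unfolding F_def by (rule Collect_cong) (simp add: ac_simps)
      show ?thesis unfolding eq
        by (rule half_count[where h="\<lambda>x. Arr (x*n + j div 2) c + j" and n=m, OF that, simplified])
    qed
    have v: "\<forall>i<2*m. \<forall>j<2*n. F c i j < 2" unfolding F_def by simp
    have r: "\<forall>i<2*m. \<forall>s<2. card {j. j < 2*n \<and> F c i j = s} = 2*n div 2"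
      using rows by simp
    have cl: "\<forall>j<2*n. \<forall>s<2. card {i. i < 2*m \<and> F c i j = s} = 2*m div 2"
      using cols by simp
    show ?thesis unfolding freq_rect_def using v r cl by simp
  qed
  have orth: "orthogonal_fr (2*m) (2*n) 2 (F c) (F d)" if cd: "c < k" "d < k" "c \<noteq> d" for c d
  proof -
    have "distinct [c, d] \<and> length [c, d] = 2 \<and> set [c, d] \<subseteq> {..<k}" using that by simp
    then obtain lam where lam: "\<And>tup. length tup = 2 \<Longrightarrow> set tup \<subseteq> {..<2} \<Longrightarrow>
        card {r. r < m*n \<and> map (Arr r) [c, d] = tup} = lam"
      using oa unfolding orth_array_def by blast
    have "card {(i, j). i < 2*m \<and> j < 2*n \<and> F c i j = s \<and> F d i j = t} = 4 * lam"
      if st: "s < 2" "t < 2" for s t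
    proof -
      have key: "F e i j = (Arr ((i div 2)*n + j div 2) e + i mod 2 + j mod 2) mod 2" for e i j
        unfolding F_def by (rule ar3)
      define P where "P r a b = ((Arr r c + a + b) mod 2 = s \<and> (Arr r d + a + b) mod 2 = t)" for r a b
      have seteq: "{(i, j). i < 2*m \<and> j < 2*n \<and> F c i j = s \<and> F d i j = t}
          = {(i, j). i < 2*m \<and> j < 2*n \<and> P ((i div 2)*n + j div 2) (i mod 2) (j mod 2)}"
        by (simp only: key P_def)
      have "card {(i, j). i < 2*m \<and> j < 2*n \<and> F c i j = s \<and> F d i j = t}
          = card {(i, j). i < 2*m \<and> j < 2*n \<and> P ((i div 2)*n + j div 2) (i mod 2) (j mod 2)}"
        by (simp only: seteq)
      also have "\<dots> = card {(r, a, b). r < m*n \<and> a < 2 \<and> b < 2 \<and> P r a b}"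
        by (rule block_count[OF assms(2)])
      also have "\<dots> = 4 * lam"
      proof (rule split_count)
        fix a b :: nat assume ab: "a < 2" "b < 2"
        have "{r. r < m*n \<and> P r a b}
            = {r. r < m*n \<and> map (Arr r) [c, d] = [(s + a + b) mod 2, (t + a + b) mod 2]}"
        proof (rule Collect_cong)
          fix r
          show "(r < m*n \<and> P r a b) = (r < m*n \<and> map (Arr r) [c, d] = [(s + a + b) mod 2, (t + a + b) mod 2])"
          proof (cases "r < m*n")
            case True
            have "Arr r c < 2" "Arr r d < 2" using lt2[OF True] cd by auto
            then show ?thesis unfolding P_def using ar4[OF _ st(1)] ar4[OF _ st(2)] True by simp
          qed simp
        qed
        also have "card \<dots> = lam" by (rule lam) auto
        finally show "card {r. r < m*n \<and> P r a b} = lam" .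
      qed
      finally show ?thesis .
    qed
    then show ?thesis unfolding orthogonal_fr_def by blast
  qed
  have "MOFR k (2*m) (2*n) 2 F" unfolding MOFR_def using fr orth by blast
  then show ?thesis by blast
qed

end
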